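(* Let $\Gamma_0>0$ and $\rho_0\in(0,\frac\pi2)$. There exist $h_0>0$ and $C_0>0$ such that for all $h\in(0,h_0)$ and every eigenpair $(\lambda,\psi)$ of $\mathcal H_{\mathsf{BO},\mathsf{Tri}}(h)$ with $|\lambda-\frac18|\le\Gamma_0h^{2/3}$, $$\int_{-\pi\sqrt2}^0(x+\pi\sqrt2)^{-\rho_0/h}\big(|\psi|^2+|h\,\partial_x\psi|^2\big)\,dx\le C_0\|\psi\|^2.$$
   Context: For $h>0$, $\mathcal H_{\mathsf{BO},\mathsf{Tri}}(h)=-h^2\partial_x^2+\frac{\pi^2}{4(x+\pi\sqrt2)^2}$ is the Dirichlet realization on $L^2((-\pi\sqrt2,0))$; $\|\cdot\|$ is the $L^2((-\pi\sqrt2,0))$ norm. *)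

theory Defs
  imports "HOL-Analysis.Analysis"
begin

definition BOleft :: real where "BOleft = - pi * sqrt 2"

definition BOpot :: "real \<Rightarrow> real" where
  "BOpot x = pi\<^sup>2 / (4 * (x + pi * sqrt 2)\<^sup>2)"

text \<open>(lam, psi) is an eigenpair of the Dirichlet realization of
  -h^2 d^2/dx^2 + BOpot on L^2((-pi sqrt 2, 0)), with dpsi the derivative of psi.
  psi lies in the form domain (continuous on the closed interval, vanishing at both
  endpoints, square-integrable derivative, finite potential energy), is C^2 in the
  interior (interior elliptic regularity) and solves the eigenvalue equation there;
  psi is not identically zero.\<close>
definition BO_eigenpair :: "real \<Rightarrow> real \<Rightarrow> (real \<Rightarrow> complex) \<Rightarrow> (real \<Rightarrow> complex) \<Rightarrow> bool" where
  "BO_eigenpair h lam psi dpsi \<longleftrightarrow>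
     continuous_on {BOleft..0} psi \<and> psi BOleft = 0 \<and> psi 0 = 0 \<and>
     (\<exists>x\<in>{BOleft<..<0}. psi x \<noteq> 0) \<and>
     (\<exists>ddpsi. \<forall>x\<in>{BOleft<..<0}.
        (psi has_vector_derivative dpsi x) (at x) \<and>
        (dpsi has_vector_derivative ddpsi x) (at x) \<and>
        - complex_of_real (h\<^sup>2) * ddpsi x + complex_of_real (BOpot x) * psi x
          = complex_of_real lam * psi x) \<and>
     (\<lambda>x. (cmod (dpsi x))\<^sup>2) integrable_on {BOleft..0} \<and>
     (\<lambda>x. BOpot x * (cmod (psi x))\<^sup>2) integrable_on {BOleft..0}"

end

theory Submission
  imports Defs
begin

lemma Re_ofr_mult: "Re (complex_of_real r * z) = r * Re z"
  by simp

lemma Re_mult_cnj: "Re (z * cnj z) = (cmod z)\<^sup>2"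
  by (metis Re_complex_of_real complex_norm_square)

lemma deriv_block:
  fixes h rho :: real and psi dpsi ddpsi :: "real \<Rightarrow> complex" and x :: real
  assumes h: "h > 0" and x: "x \<in> {BOleft<..<0}"
    and d1: "(psi has_vector_derivative dpsi x) (at x)"
    and d2: "(dpsi has_vector_derivative ddpsi x) (at x)"
  shows "((\<lambda>x. h\<^sup>2 * ((x + pi * sqrt 2) powr (- rho / h) * Re (dpsi x * cnj (psi x))))
          has_real_derivative
          h\<^sup>2 * ((- rho / h) * ((x + pi * sqrt 2) powr (- rho / h) / (x + pi * sqrt 2)) * Re (dpsi x * cnj (psi x))
             + (Re (ddpsi x * cnj (psi x)) + (cmod (dpsi x))\<^sup>2) * (x + pi * sqrt 2) powr (- rho / h))) (at x)"
proof -
  have s: "x + pi * sqrt 2 > 0" using x by (simp add: BOleft_def)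
  have dR: "((\<lambda>x. Re (dpsi x * cnj (psi x))) has_real_derivative
            Re (dpsi x * cnj (dpsi x) + ddpsi x * cnj (psi x))) (at x)"
    by (intro has_field_derivative_Re has_vector_derivative_mult has_vector_derivative_cnj d1 d2)
  have dR': "Re (dpsi x * cnj (dpsi x) + ddpsi x * cnj (psi x)) = Re (ddpsi x * cnj (psi x)) + (cmod (dpsi x))\<^sup>2"
    using Re_mult_cnj[of "dpsi x"] by simp
  have dq0: "((\<lambda>x. (x + pi * sqrt 2) powr (- rho / h)) has_real_derivative
        (- rho / h) * (x + pi * sqrt 2) powr (- rho / h - 1) * 1) (at x)"
    by (rule DERIV_fun_powr[where g = "\<lambda>x. x + pi * sqrt 2", simplified of_nat_1])
       (auto intro!: derivative_eq_intros s)
  have pq: "(x + pi * sqrt 2) powr (- rho / h - 1) = (x + pi * sqrt 2) powr (- rho / h) / (x + pi * sqrt 2)"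
    using s by (simp add: powr_diff)
  have dq: "((\<lambda>x. (x + pi * sqrt 2) powr (- rho / h)) has_real_derivative
        (- rho / h) * ((x + pi * sqrt 2) powr (- rho / h) / (x + pi * sqrt 2))) (at x)"
    using dq0 pq by (simp add: mult.commute)
  have m: "((\<lambda>x. (x + pi * sqrt 2) powr (- rho / h) * Re (dpsi x * cnj (psi x))) has_real_derivative
          (- rho / h) * ((x + pi * sqrt 2) powr (- rho / h) / (x + pi * sqrt 2)) * Re (dpsi x * cnj (psi x))
          + (Re (ddpsi x * cnj (psi x)) + (cmod (dpsi x))\<^sup>2) * (x + pi * sqrt 2) powr (- rho / h)) (at x)"
    using DERIV_mult[OF dq dR] unfolding dR' .
  show ?thesis by (rule DERIV_cmult[OF m])
qed

lemma amgm_aux: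
  fixes h k Rv A B :: real
  assumes "h > 0" "k > 0" "A \<ge> 0" "B \<ge> 0" "Rv\<^sup>2 \<le> A * B"
  shows "2 * h * k * Rv \<le> h\<^sup>2 * B + k\<^sup>2 * A"
proof -
  have y0: "0 \<le> h\<^sup>2 * B + k\<^sup>2 * A" using assms by simp
  have "(2 * h * k * Rv)\<^sup>2 = (4 * h\<^sup>2 * k\<^sup>2) * Rv\<^sup>2" by algebra
  also have "\<dots> \<le> (4 * h\<^sup>2 * k\<^sup>2) * (A * B)" 
    by (rule mult_left_mono) (use assms in auto)
  also have "\<dots> \<le> (h\<^sup>2 * B + k\<^sup>2 * A)\<^sup>2"
  proof -
    have "(h\<^sup>2 * B + k\<^sup>2 * A)\<^sup>2 - (4 * h\<^sup>2 * k\<^sup>2) * (A * B) = (h\<^sup>2 * B - k\<^sup>2 * A)\<^sup>2"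
      by algebra
    moreover have "0 \<le> (h\<^sup>2 * B - k\<^sup>2 * A)\<^sup>2" by simp
    ultimately show ?thesis by linarith
  qed
  finally show ?thesis using y0 by (rule power2_le_imp_le)
qed
lemma key_ineq:
  fixes q s h rho lam A B Rv E :: real
  assumes pi3: "pi > 3" and q: "q > 0" and s: "s > 0" and h: "h > 0" and rho: "rho > 0" "rho < pi / 2"
    and lam: "lam \<le> 1/2" and A: "A \<ge> 0" and B: "B \<ge> 0" and R: "Rv\<^sup>2 \<le> A * B"
    and E: "h\<^sup>2 * E = (pi\<^sup>2 / (4 * s\<^sup>2) - lam) * A"
    and q1: "s \<ge> 1 \<Longrightarrow> q \<le> 1"
  shows "q * (A + h\<^sup>2 * B) \<le> 2 * (h\<^sup>2 * ((- rho / h) * (q / s) * Rv + q * (E + B))) + 2 * A"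
proof -
  define k where "k = rho / s"
  have k: "k > 0" using rho s by (simp add: k_def)
  have X: "2 * h * k * Rv \<le> h\<^sup>2 * B + k\<^sup>2 * A" by (rule amgm_aux[OF h k A B R])
  have e1: "2 * (h\<^sup>2 * ((- rho / h) * (q / s) * Rv + q * (E + B))) + 2 * A - q * (A + h\<^sup>2 * B)
      = q * (h\<^sup>2 * B - 2 * h * k * Rv) + q * (2 * (pi\<^sup>2 / (4 * s\<^sup>2) - lam) - 1) * A + 2 * A"
  proof -
    have a1: "h\<^sup>2 * ((- rho / h) * (q / s) * Rv) = - (h * q * k * Rv)"
      using h s unfolding k_def by (simp add: field_simps power2_eq_square)
    have a2: "h\<^sup>2 * ((- rho / h) * (q / s) * Rv + q * (E + B)) = - (h * q * k * Rv) + q * (h\<^sup>2 * E) + q * h\<^sup>2 * B"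
      using a1 by (simp add: algebra_simps)
    show ?thesis unfolding a2 E by (simp add: algebra_simps)
  qed
  have "q * (h\<^sup>2 * B - 2 * h * k * Rv) \<ge> q * (- k\<^sup>2 * A)"
    using X q by (intro mult_left_mono) auto
  moreover have "q * (2 * (pi\<^sup>2 / (4 * s\<^sup>2) - lam) - 1) * A + 2 * A - q * k\<^sup>2 * A \<ge> 0"
  proof -
    have rho2: "rho\<^sup>2 \<le> pi\<^sup>2 / 4"
    proof -
      have "rho\<^sup>2 \<le> (pi/2)\<^sup>2" using rho by (intro power_mono) auto
      thus ?thesis by (simp add: power_divide)
    qed
    have c: "2 * (pi\<^sup>2 / (4 * s\<^sup>2)) - k\<^sup>2 \<ge> (pi\<^sup>2 / 4) / s\<^sup>2"
    proof -
      have "2 * (pi\<^sup>2 / (4 * s\<^sup>2)) - k\<^sup>2 = (pi\<^sup>2 / 2 - rho\<^sup>2) / s\<^sup>2"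
        unfolding k_def using s by (simp add: field_simps power2_eq_square)
      also have "\<dots> \<ge> (pi\<^sup>2 / 4) / s\<^sup>2" using rho2 s by (intro divide_right_mono) auto
      finally show ?thesis .
    qed
    have pi2: "pi\<^sup>2 \<ge> 8"
    proof -
      have "(3::real)\<^sup>2 \<le> pi\<^sup>2" using pi3 by (intro power_mono) auto
      thus ?thesis by simp
    qed
    have dd: "2 * (pi\<^sup>2 / (4 * s\<^sup>2) - lam) = 2 * (pi\<^sup>2 / (4 * s\<^sup>2)) - 2 * lam" by simp
    show ?thesis
    proof (cases "s \<le> 1")
      case True
      have "s\<^sup>2 \<le> 1" using True s by (simp add: power_le_one)
      hence "(pi\<^sup>2 / 4) / s\<^sup>2 \<ge> pi\<^sup>2 / 4" using s by (simp add: field_simps)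
      hence "2 * (pi\<^sup>2 / (4 * s\<^sup>2) - lam) - 1 - k\<^sup>2 \<ge> 0" using c pi2 lam dd by linarith
      hence "q * A * (2 * (pi\<^sup>2 / (4 * s\<^sup>2) - lam) - 1 - k\<^sup>2) \<ge> 0" using q A by simp
      thus ?thesis using A by (simp add: algebra_simps)
    next
      case False
      have "(pi\<^sup>2 / 4) / s\<^sup>2 \<ge> 0" by simp
      hence "2 * (pi\<^sup>2 / (4 * s\<^sup>2) - lam) - 1 - k\<^sup>2 \<ge> -2" using c lam dd by linarith
      hence "q * A * (2 * (pi\<^sup>2 / (4 * s\<^sup>2) - lam) - 1 - k\<^sup>2) \<ge> q * A * (-2)"
        using q A by (intro mult_left_mono) auto
      moreover have "q * A \<le> 1 * A" using q1 False A by (intro mult_right_mono) auto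
      ultimately show ?thesis by (simp add: algebra_simps)
    qed
  qed
  moreover have "q * (- k\<^sup>2 * A) = - (q * k\<^sup>2 * A)" by simp
  ultimately show ?thesis using e1 by linarith
qed


lemma interval_bound:
  fixes h rho lam a b :: real and psi dpsi ddpsi :: "real \<Rightarrow> complex"
  assumes h: "h > 0" and rho: "0 < rho" "rho < pi / 2" and lam: "lam \<le> 1/2"
    and cont: "continuous_on {BOleft..0} psi" and p0: "psi BOleft = 0" "psi 0 = 0"
    and der: "\<forall>x\<in>{BOleft<..<0}. (psi has_vector_derivative dpsi x) (at x) \<and>
        (dpsi has_vector_derivative ddpsi x) (at x) \<and>
        - complex_of_real (h\<^sup>2) * ddpsi x + complex_of_real (BOpot x) * psi x
          = complex_of_real lam * psi x"
    and ab: "BOleft < a" "a \<le> b" "b < 0"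
  defines "P \<equiv> (\<lambda>x. (x + pi * sqrt 2) powr (- rho / h) *
                         ((cmod (psi x))\<^sup>2 + (cmod (complex_of_real h * dpsi x))\<^sup>2))"
  shows "P integrable_on {a..b} \<and> integral {a..b} P \<le> 2 * integral {BOleft..0} (\<lambda>x. (cmod (psi x))\<^sup>2)"
proof -
  define I where "I = {BOleft<..<0}"
  define q where "q x = (x + pi * sqrt 2) powr (- rho / h)" for x
  define R where "R x = Re (dpsi x * cnj (psi x))" for x
  define F where "F x = h\<^sup>2 * (q x * R x)" for x
  define F' where "F' x = h\<^sup>2 * ((- rho / h) * (q x / (x + pi * sqrt 2)) * R x
             + (Re (ddpsi x * cnj (psi x)) + (cmod (dpsi x))\<^sup>2) * q x)" for x
  define N where "N = integral {BOleft..0} (\<lambda>x. (cmod (psi x))\<^sup>2)"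
  have spos: "x + pi * sqrt 2 > 0" if "x \<in> I" for x using that by (simp add: I_def BOleft_def)
  have d1: "(psi has_vector_derivative dpsi x) (at x)" if "x \<in> I" for x using der that I_def by blast
  have d2: "(dpsi has_vector_derivative ddpsi x) (at x)" if "x \<in> I" for x using der that I_def by blast
  have eq: "- complex_of_real (h\<^sup>2) * ddpsi x + complex_of_real (BOpot x) * psi x
          = complex_of_real lam * psi x" if "x \<in> I" for x using der that I_def by blast
  have dF: "(F has_real_derivative F' x) (at x)" if "x \<in> I" for x
    unfolding F_def F'_def q_def R_def
    by (rule deriv_block[OF h _ d1 d2]) (use that I_def in auto)
  have cq: "isCont q x" if "x \<in> I" for x
    unfolding q_def using spos[OF that] by (auto intro!: continuous_intros)
  have cpsi: "isCont psi x" if "x \<in> I" for x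
    using d1[OF that] by (rule has_vector_derivative_continuous)
  have cdpsi: "isCont dpsi x" if "x \<in> I" for x
    using d2[OF that] by (rule has_vector_derivative_continuous)
  have Peq: "P x = q x * ((cmod (psi x))\<^sup>2 + h\<^sup>2 * (cmod (dpsi x))\<^sup>2)" for x
    using h by (simp add: P_def q_def norm_mult power_mult_distrib)
  have cP: "continuous_on {c..d} P" if "{c..d} \<subseteq> I" for c d
  proof (rule continuous_at_imp_continuous_on, rule ballI)
    fix x assume "x \<in> {c..d}"
    hence x: "x \<in> I" using that by blast
    show "isCont P x" unfolding Peq[abs_def]
      using cq[OF x] cpsi[OF x] cdpsi[OF x] by (auto intro!: continuous_intros)
  qed
  have Pnn: "0 \<le> P x" if "x \<in> I" for x
    unfolding Peq q_def by simp
  have pw: "P x \<le> 2 * F' x + 2 * (cmod (psi x))\<^sup>2" if "x \<in> I" for x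
  proof -
    define s where "s = x + pi * sqrt 2"
    have s: "s > 0" using spos[OF that] by (simp add: s_def)
    have qpos: "q x > 0" unfolding q_def using s s_def by simp
    have q1: "q x \<le> 1" if "s \<ge> 1"
    proof -
      have "s powr (- rho / h) \<le> 1 powr (- rho / h)"
        using that h rho by (intro powr_mono2') (auto simp: divide_nonneg_pos)
      thus ?thesis by (simp add: q_def s_def)
    qed
    have Rb: "(R x)\<^sup>2 \<le> (cmod (psi x))\<^sup>2 * (cmod (dpsi x))\<^sup>2"
    proof -
      have "\<bar>R x\<bar> \<le> cmod (dpsi x * cnj (psi x))" unfolding R_def by (rule abs_Re_le_cmod)
      also have "\<dots> = cmod (psi x) * cmod (dpsi x)" by (simp add: norm_mult)
      finally have "\<bar>R x\<bar>\<^sup>2 \<le> (cmod (psi x) * cmod (dpsi x))\<^sup>2"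
        by (intro power_mono) auto
      thus ?thesis by (simp add: power_mult_distrib)
    qed
    have eqc: "complex_of_real (h\<^sup>2) * ddpsi x = complex_of_real (BOpot x - lam) * psi x"
      using eq[OF that] by (simp add: algebra_simps)
    have "Re (complex_of_real (h\<^sup>2) * ddpsi x * cnj (psi x)) = Re (complex_of_real (BOpot x - lam) * psi x * cnj (psi x))"
      using eqc by simp
    hence "h\<^sup>2 * Re (ddpsi x * cnj (psi x)) = (BOpot x - lam) * Re (psi x * cnj (psi x))"
      by (simp only: mult.assoc Re_ofr_mult) 
    hence E: "h\<^sup>2 * Re (ddpsi x * cnj (psi x)) = (pi\<^sup>2 / (4 * s\<^sup>2) - lam) * (cmod (psi x))\<^sup>2"
      by (simp only: Re_mult_cnj BOpot_def s_def)
    have K: "q x * ((cmod (psi x))\<^sup>2 + h\<^sup>2 * (cmod (dpsi x))\<^sup>2) \<le>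
        2 * (h\<^sup>2 * ((- rho / h) * (q x / s) * R x + q x * (Re (ddpsi x * cnj (psi x)) + (cmod (dpsi x))\<^sup>2))) + 2 * (cmod (psi x))\<^sup>2"
      by (rule key_ineq[OF pi_gt3 qpos s h rho lam _ _ Rb E q1]) auto
    show ?thesis using K unfolding Peq F'_def s_def by (simp add: mult.commute)
  qed
  have fder: "((\<lambda>x. Re (psi x * cnj (psi x))) has_real_derivative 2 * R x) (at x)" if "x \<in> I" for x
  proof -
    have "((\<lambda>x. Re (psi x * cnj (psi x))) has_real_derivative Re (psi x * cnj (dpsi x) + dpsi x * cnj (psi x))) (at x)"
      by (intro has_field_derivative_Re has_vector_derivative_mult has_vector_derivative_cnj d1[OF that])
    moreover have "Re (psi x * cnj (dpsi x) + dpsi x * cnj (psi x)) = 2 * R x"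
      unfolding R_def by simp
    ultimately show ?thesis by simp
  qed
  have fcont: "continuous_on {BOleft..0} (\<lambda>x. Re (psi x * cnj (psi x)))"
    using cont by (auto intro!: continuous_intros)
  have mvt: "\<exists>z. c < z \<and> z < d \<and> Re (psi d * cnj (psi d)) - Re (psi c * cnj (psi c)) = (d - c) * (2 * R z)"
    if "BOleft \<le> c" "c < d" "d \<le> 0" for c d
  proof -
    have "continuous_on {c..d} (\<lambda>x. Re (psi x * cnj (psi x)))"
      using fcont by (rule continuous_on_subset) (use that in auto)
    moreover have "(\<lambda>x. Re (psi x * cnj (psi x))) differentiable (at x)" if "c < x" "x < d" for x
      using fder[of x] that \<open>BOleft \<le> c\<close> \<open>d \<le> 0\<close> unfolding I_def
      by (auto simp: real_differentiable_def)
    ultimately obtain l z where z: "c < z" "z < d" "DERIV (\<lambda>x. Re (psi x * cnj (psi x))) z :> l"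
        "Re (psi d * cnj (psi d)) - Re (psi c * cnj (psi c)) = (d - c) * l"
      using MVT[OF \<open>c < d\<close>] by blast
    have "z \<in> I" using z that by (auto simp: I_def)
    hence "l = 2 * R z" using DERIV_unique[OF z(3) fder] by blast
    thus ?thesis using z by blast
  qed
  obtain a' where a': "BOleft < a'" "a' < a" "R a' \<ge> 0"
  proof -
    obtain z where z: "BOleft < z" "z < a" "Re (psi a * cnj (psi a)) - Re (psi BOleft * cnj (psi BOleft)) = (a - BOleft) * (2 * R z)"
      using mvt[of BOleft a] ab by auto
    have "0 \<le> Re (psi a * cnj (psi a))" by (simp only: Re_mult_cnj zero_le_power2)
    moreover have "Re (psi BOleft * cnj (psi BOleft)) = 0" using p0 by simp
    ultimately have "0 \<le> (a - BOleft) * (2 * R z)" using z(3) by linarith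
    hence "R z \<ge> 0" using ab by (simp add: zero_le_mult_iff)
    thus ?thesis using that z by blast
  qed
  obtain b' where b': "b < b'" "b' < 0" "R b' \<le> 0"
  proof -
    obtain z where z: "b < z" "z < 0" "Re (psi 0 * cnj (psi 0)) - Re (psi b * cnj (psi b)) = (0 - b) * (2 * R z)"
      using mvt[of b 0] ab by auto
    have "0 \<le> Re (psi b * cnj (psi b))" by (simp only: Re_mult_cnj zero_le_power2)
    moreover have "Re (psi 0 * cnj (psi 0)) = 0" using p0 by simp
    ultimately have "(0 - b) * (2 * R z) \<le> 0" using z(3) by linarith
    hence "R z \<le> 0" using ab by (simp add: mult_le_0_iff zero_le_mult_iff)
    thus ?thesis using that z by blast
  qed
  have sub': "{a'..b'} \<subseteq> I" using a' b' by (auto simp: I_def)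
  have ftc: "(F' has_integral (F b' - F a')) {a'..b'}"
  proof (rule fundamental_theorem_of_calculus)
    show "a' \<le> b'" using a' b' ab by simp
    fix x assume "x \<in> {a'..b'}"
    hence "x \<in> I" using sub' by blast
    thus "(F has_vector_derivative F' x) (at x within {a'..b'})"
      using dF[of x] by (auto simp: has_real_derivative_iff_has_vector_derivative intro: has_vector_derivative_at_within)
  qed
  have cpsi2: "continuous_on {BOleft..0} (\<lambda>x. (cmod (psi x))\<^sup>2)"
    using cont by (auto intro!: continuous_intros)
  have ipsiN: "(\<lambda>x. (cmod (psi x))\<^sup>2) integrable_on {BOleft..0}"
    using cpsi2 by (rule integrable_continuous_interval)
  have ipsi: "(\<lambda>x. (cmod (psi x))\<^sup>2) integrable_on {a'..b'}"
    using cpsi2 by (intro integrable_continuous_interval continuous_on_subset[OF cpsi2]) (use a' b' in auto)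
  have psile: "integral {a'..b'} (\<lambda>x. (cmod (psi x))\<^sup>2) \<le> N"
    unfolding N_def using a' b'
    by (intro integral_subset_le ipsi ipsiN) auto
  have G: "((\<lambda>x. 2 * F' x + 2 * (cmod (psi x))\<^sup>2) has_integral
        (2 * (F b' - F a') + 2 * integral {a'..b'} (\<lambda>x. (cmod (psi x))\<^sup>2))) {a'..b'}"
    by (intro has_integral_add has_integral_mult_right ftc integrable_integral ipsi)
  have iP': "P integrable_on {a'..b'}" by (intro integrable_continuous_interval cP sub')
  have le1: "integral {a'..b'} P \<le> 2 * (F b' - F a') + 2 * integral {a'..b'} (\<lambda>x. (cmod (psi x))\<^sup>2)"
    by (rule has_integral_le[OF integrable_integral[OF iP'] G]) (use pw sub' in auto)
  have Fa: "F a' \<ge> 0" unfolding F_def q_def using a'(3) by simp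
  have Fb: "F b' \<le> 0" unfolding F_def q_def using b'(3) by (simp add: mult_nonneg_nonpos)
  have subab: "{a..b} \<subseteq> {a'..b'}" using a' b' by auto
  have iP: "P integrable_on {a..b}" by (intro integrable_continuous_interval cP) (use subab sub' in blast)
  have "integral {a..b} P \<le> integral {a'..b'} P"
    by (rule integral_subset_le[OF subab iP iP']) (use Pnn sub' in blast)
  also have "\<dots> \<le> 2 * N"
  proof -
    have gen: "\<And>(A::real) (B::real) (C::real) (D::real) (E::real). A \<le> 2*(B - C) + 2*D \<Longrightarrow> 0 \<le> C \<Longrightarrow> B \<le> 0 \<Longrightarrow> D \<le> E \<Longrightarrow> A \<le> 2*E"
      by (simp add: right_diff_distrib)
    show ?thesis by (rule gen[OF le1 Fa Fb psile])
  qed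
  finally show ?thesis using iP unfolding N_def by blast
qed


lemma open_limit:
  fixes P :: "real \<Rightarrow> real" and l r B :: real
  assumes lr: "l < r"
   and nn: "\<And>x. x \<in> {l<..<r} \<Longrightarrow> 0 \<le> P x"
   and int: "\<And>a b. l < a \<Longrightarrow> a \<le> b \<Longrightarrow> b < r \<Longrightarrow> P integrable_on {a..b}"
   and bd: "\<And>a b. l < a \<Longrightarrow> a \<le> b \<Longrightarrow> b < r \<Longrightarrow> integral {a..b} P \<le> B"
  shows "P integrable_on {l..r} \<and> integral {l..r} P \<le> B"
proof -
  define e where "e k = (r - l) / (real k + 3)" for k :: nat
  define a where "a k = l + e k" for k
  define b where "b k = r - e k" for k
  have e_pos: "0 < e k" for k using lr by (simp add: e_def)
  have e_dec: "e (Suc k) \<le> e k" for k using lr unfolding e_def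
    by (intro divide_left_mono) auto
  have e_small: "e k < (r - l) / 2" for k using lr unfolding e_def
    by (intro divide_strict_left_mono) auto
  have ab: "l < a k" "a k \<le> b k" "b k < r" for k
    using e_pos[of k] e_small[of k] by (auto simp: a_def b_def field_simps)
  define S where "S = {l<..<r}"
  define f where "f k x = (if x \<in> {a k..b k} then P x else 0)" for k x
  have sub: "{a k..b k} \<subseteq> S" for k using ab[of k] by (auto simp: S_def)
  have fi: "(f k has_integral integral {a k..b k} P) S" for k
    unfolding f_def by (subst has_integral_restrict[OF sub[of k]]) (rule integrable_integral[OF int[OF ab(1-3)[of k]]])
  have f_int: "f k integrable_on S" for k using fi by blast
  have f_eq: "integral S (f k) = integral {a k..b k} P" for k using fi by blast
  have mono: "f k x \<le> f (Suc k) x" if "x \<in> S" for k x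
  proof (cases "x \<in> {a k..b k}")
    case True
    hence "x \<in> {a (Suc k)..b (Suc k)}" using e_dec[of k] by (auto simp: a_def b_def)
    thus ?thesis using True by (simp add: f_def)
  next
    case False
    hence "f k x = 0" unfolding f_def by auto
    moreover have "0 \<le> f (Suc k) x" using nn that by (simp add: f_def S_def)
    ultimately show ?thesis by simp
  qed
  have lim: "((\<lambda>k. f k x) \<longlongrightarrow> P x) sequentially" if "x \<in> S" for x
  proof -
    define d where "d = min (x - l) (r - x)"
    have d: "d > 0" using that by (simp add: d_def S_def)
    obtain N :: nat where N: "(r - l) / d < real N" using reals_Archimedean2 by blast
    have "f k x = P x" if "k \<ge> N" for k
    proof -
      have "r - l < d * real N" using N d by (simp add: field_simps)
      also have "\<dots> \<le> d * (real k + 3)" using that d by (intro mult_left_mono) auto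
      finally have "e k < d" unfolding e_def using d by (simp add: field_simps)
      hence "x \<in> {a k..b k}" by (auto simp: a_def b_def d_def)
      thus ?thesis by (simp add: f_def)
    qed
    hence "eventually (\<lambda>k. f k x = P x) sequentially" by (auto simp: eventually_sequentially)
    thus ?thesis by (rule tendsto_eventually)
  qed
  have bnd: "bounded (range (\<lambda>k. integral S (f k)))"
  proof (rule boundedI)
    fix y assume "y \<in> range (\<lambda>k. integral S (f k))"
    then obtain k where y: "y = integral {a k..b k} P" using f_eq by auto
    have "0 \<le> integral {a k..b k} P"
      using int[OF ab(1-3)[of k]] nn sub[of k] by (intro integral_nonneg) (auto simp: S_def)
    moreover have "integral {a k..b k} P \<le> B" using bd[OF ab(1-3)[of k]] .
    ultimately show "norm y \<le> B" using y by simp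
  qed
  have mc: "P integrable_on S \<and> ((\<lambda>k. integral S (f k)) \<longlongrightarrow> integral S P) sequentially"
    by (rule monotone_convergence_increasing[OF f_int mono lim bnd])
  have le: "integral S P \<le> B"
  proof (rule LIMSEQ_le_const2)
    show "(\<lambda>k. integral S (f k)) \<longlonglongrightarrow> integral S P" using mc by blast
    show "\<exists>N. \<forall>n\<ge>N. integral S (f n) \<le> B" using bd[OF ab(1-3)] f_eq by auto
  qed
  show ?thesis using mc le unfolding S_def
    by (simp add: integrable_on_Icc_iff_Ioo integral_open_interval_real)
qed

theorem proposition4p4:
  fixes Gamma0 rho0 :: real
  assumes "Gamma0 > 0" and "0 < rho0" and "rho0 < pi / 2"
  shows "\<exists>h0>0. \<exists>C0>0. \<forall>h lam psi dpsi.
           0 < h \<and> h < h0 \<and> BO_eigenpair h lam psi dpsi \<and>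
           \<bar>lam - 1/8\<bar> \<le> Gamma0 * h powr (2/3) \<longrightarrow>
           (let w = (\<lambda>x. (x + pi * sqrt 2) powr (- rho0 / h) *
                         ((cmod (psi x))\<^sup>2 + (cmod (complex_of_real h * dpsi x))\<^sup>2))
            in w integrable_on {BOleft..0} \<and>
               integral {BOleft..0} w \<le> C0 * integral {BOleft..0} (\<lambda>x. (cmod (psi x))\<^sup>2))"
proof -
  define h0 where "h0 = (3 / (8 * Gamma0)) powr (3/2)"
  have h0: "h0 > 0" using assms by (simp add: h0_def)
  have h0p: "h0 powr (2/3) = 3 / (8 * Gamma0)" unfolding h0_def using assms by (simp add: powr_powr)
  have main: "\<forall>h lam psi dpsi.
           0 < h \<and> h < h0 \<and> BO_eigenpair h lam psi dpsi \<and>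
           \<bar>lam - 1/8\<bar> \<le> Gamma0 * h powr (2/3) \<longrightarrow>
           (let w = (\<lambda>x. (x + pi * sqrt 2) powr (- rho0 / h) *
                         ((cmod (psi x))\<^sup>2 + (cmod (complex_of_real h * dpsi x))\<^sup>2))
            in w integrable_on {BOleft..0} \<and>
               integral {BOleft..0} w \<le> 2 * integral {BOleft..0} (\<lambda>x. (cmod (psi x))\<^sup>2))"
  proof (intro allI impI)
    fix h lam :: real and psi dpsi :: "real \<Rightarrow> complex"
    assume H: "0 < h \<and> h < h0 \<and> BO_eigenpair h lam psi dpsi \<and> \<bar>lam - 1/8\<bar> \<le> Gamma0 * h powr (2/3)"
    have h: "h > 0" using H by blast
    have "h powr (2/3) < h0 powr (2/3)" using H by (intro powr_less_mono2) auto
    hence "Gamma0 * h powr (2/3) \<le> Gamma0 * h0 powr (2/3)" using assms by (intro mult_left_mono) auto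
    also have "\<dots> = 3/8" using assms h0p by simp
    finally have lam: "lam \<le> 1/2" using H by linarith
    have ep: "BO_eigenpair h lam psi dpsi" using H by blast
    have cont: "continuous_on {BOleft..0} psi" and p0: "psi BOleft = 0" "psi 0 = 0"
      using ep unfolding BO_eigenpair_def by auto
    obtain ddpsi where der: "\<forall>x\<in>{BOleft<..<0}. (psi has_vector_derivative dpsi x) (at x) \<and>
        (dpsi has_vector_derivative ddpsi x) (at x) \<and>
        - complex_of_real (h\<^sup>2) * ddpsi x + complex_of_real (BOpot x) * psi x
          = complex_of_real lam * psi x"
      using ep unfolding BO_eigenpair_def by blast
    define P where "P = (\<lambda>x. (x + pi * sqrt 2) powr (- rho0 / h) *
                         ((cmod (psi x))\<^sup>2 + (cmod (complex_of_real h * dpsi x))\<^sup>2))"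
    have IB: "P integrable_on {a..b} \<and> integral {a..b} P \<le> 2 * integral {BOleft..0} (\<lambda>x. (cmod (psi x))\<^sup>2)"
      if "BOleft < a" "a \<le> b" "b < 0" for a b
      unfolding P_def
      by (rule interval_bound[OF h assms(2) assms(3) lam cont p0 der that])
    have lt: "BOleft < 0" by (simp add: BOleft_def)
    have res: "P integrable_on {BOleft..0} \<and> integral {BOleft..0} P \<le> 2 * integral {BOleft..0} (\<lambda>x. (cmod (psi x))\<^sup>2)"
      by (rule open_limit[OF lt]) (use IB in \<open>auto simp: P_def\<close>)
    show "let w = (\<lambda>x. (x + pi * sqrt 2) powr (- rho0 / h) *
                         ((cmod (psi x))\<^sup>2 + (cmod (complex_of_real h * dpsi x))\<^sup>2))
            in w integrable_on {BOleft..0} \<and>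
               integral {BOleft..0} w \<le> 2 * integral {BOleft..0} (\<lambda>x. (cmod (psi x))\<^sup>2)"
      using res unfolding P_def Let_def .
  qed
  show ?thesis
    apply (rule exI[of _ h0])
    apply (rule conjI[OF h0])
    apply (rule exI[of _ "2::real"])
    using main by simp
qed

end
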